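(* Assume $p(s)=N_s/N$ for all $s\in\mathcal S$, where the $N_s$ are positive integers and $N=\sum_sN_s$. Then every Yokoo–Dubé-type sAEDS for these $N_s$ (as defined in the context) whose state chain is irreducible has average code length $$L\le H(p)+\frac{C}{N},$$ for a constant $C$ that does not depend on $N$ or on the $N_s$; i.e. $L\le H(p)+O(1/N)$.
   Context: Let $\mathcal S$ be a finite alphabet with $|\mathcal S|\ge2$ and $p$ a probability distribution with $p(s)>0$ (i.i.d. source); $\lg=\log_2$, $H(p)=-\sum_sp(s)\lg p(s)$. An AEDS with finite state set $\mathcal X$ consists of maps $E_{\hat x}:\mathcal S\to\{0,1\}^*$, $F^-_{\hat x}:\mathcal S\to\mathcal X$ such that for every $x$ the words $E_{\hat x}(s)$ over pairs with $F^-_{\hat x}(s)=x$ are distinct and prefix-free. The state chain moves from $\hat x$ to $F^-_{\hat x}(s)$ with probability $p(s)$; with its stationary distribution $Q$, the average code length is $L=\sum_{\hat x}\sum_sp(s)Q(\hat x)l(E_{\hat x}(s))$. An sAEDS is an AEDS for which the sets $\mathcal X_s=\{F^-_{\hat x}(s):\hat x\in\mathcal X\}$ are pairwise disjoint with union $\mathcal X$; for $x\in\mathcal X_s$, $\mathcal F^+_x=\{\hat x:F^-_{\hat x}(s)=x\}$ (for fixed $s$ these partition $\mathcal X$). Yokoo–Dubé-type sAEDS: $|\mathcal X|=N$, $|\mathcal X_s|=N_s$, and the states are enumerated $\alpha_1,\dots,\alpha_N$ so that $Q(\alpha_1)\ge\cdots\ge Q(\alpha_N)$. For each $s$ let $\kappa_s=\lceil\lg(N/N_s)\rceil$,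 $m_s=2^{\kappa_s}N_s-N$, and let $A_s,B_s,C_s,D_s\ge0$ be integers with $2^{\kappa_s-1}A_s+B_s=m_s$, $2^{\kappa_s}C_s+D_s=2N-2^{\kappa_s}N_s$, $A_s+C_s+1=N_s$, $B_s+D_s\ge1$ (these imply $2B_s+D_s=2^{\kappa_s}$). Writing $\mathcal X_s=\{\mathsf s_1,\dots,\mathsf s_{N_s}\}$: for $1\le j\le A_s$, $\mathcal F^+_{\mathsf s_j}=\{\alpha_i: B_s+(j-1)2^{\kappa_s-1}<i\le B_s+j2^{\kappa_s-1}\}$, encoded by a fixed-length code of length $\kappa_s-1$; for $1\le j\le C_s$, $\mathcal F^+_{\mathsf s_{A_s+j}}=\{\alpha_i: m_s+(j-1)2^{\kappa_s}<i\le m_s+j2^{\kappa_s}\}$, encoded by a fixed-length code of length $\kappa_s$; and $\mathcal F^+_{\mathsf s_{N_s}}=\{\alpha_1,\dots,\alpha_{B_s}\}\cup\{\alpha_{N-D_s+1},\dots,\alpha_N\}$, encoded by a prefix-free code giving length $\kappa_s-1$ to $\alpha_1,\dots,\alpha_{B_s}$ and length $\kappa_s$ to the others. Thus $l(E_{\alpha_i}(s))=\kappa_s-1$ for $i\le m_s$ and $\kappa_s$ for $i>m_s$. *)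

theory Defs
  imports Complex_Main "HOL-Library.Sublist"
begin

text \<open>States of an AEDS with N states are identified with their enumeration indices
  1..N (state alpha_i is the natural number i).\<close>

definition N_of :: "('s::finite \<Rightarrow> nat) \<Rightarrow> nat" where
  "N_of Ns = (\<Sum>s\<in>UNIV. Ns s)"

definition prob :: "('s::finite \<Rightarrow> nat) \<Rightarrow> 's \<Rightarrow> real" where
  "prob Ns s = real (Ns s) / real (N_of Ns)"

definition entropy :: "('s::finite \<Rightarrow> real) \<Rightarrow> real" where
  "entropy p = - (\<Sum>s\<in>UNIV. p s * log 2 (p s))"

definition kappa :: "('s::finite \<Rightarrow> nat) \<Rightarrow> 's \<Rightarrow> nat" where
  "kappa Ns s = nat \<lceil>log 2 (real (N_of Ns) / real (Ns s))\<rceil>"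

definition mval :: "('s::finite \<Rightarrow> nat) \<Rightarrow> 's \<Rightarrow> int" where
  "mval Ns s = 2 ^ kappa Ns s * int (Ns s) - int (N_of Ns)"

text \<open>AEDS on state set X: F maps into X, and for every x the code words
  E a s over the pairs (a,s) with F a s = x are distinct and prefix-free
  (prefix includes equality, so this covers distinctness).\<close>
definition is_AEDS :: "nat set \<Rightarrow> (nat \<Rightarrow> 's \<Rightarrow> bool list) \<Rightarrow> (nat \<Rightarrow> 's \<Rightarrow> nat) \<Rightarrow> bool" where
  "is_AEDS X E F \<longleftrightarrow>
     (\<forall>x\<in>X. \<forall>s. F x s \<in> X) \<and>
     (\<forall>x\<in>X. \<forall>a\<in>X. \<forall>b\<in>X. \<forall>s t. F a s = x \<and> F b t = x \<and> (a, s) \<noteq> (b, t)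
        \<longrightarrow> \<not> prefix (E a s) (E b t))"

definition Xset :: "nat set \<Rightarrow> (nat \<Rightarrow> 's \<Rightarrow> nat) \<Rightarrow> 's \<Rightarrow> nat set" where
  "Xset X F s = (\<lambda>x. F x s) ` X"

definition is_sAEDS :: "nat set \<Rightarrow> (nat \<Rightarrow> 's \<Rightarrow> bool list) \<Rightarrow> (nat \<Rightarrow> 's \<Rightarrow> nat) \<Rightarrow> bool" where
  "is_sAEDS X E F \<longleftrightarrow> is_AEDS X E F \<and>
     (\<forall>s t. s \<noteq> t \<longrightarrow> Xset X F s \<inter> Xset X F t = {}) \<and>
     (\<Union>s. Xset X F s) = X"

definition stationary :: "('s::finite \<Rightarrow> real) \<Rightarrow> (nat \<Rightarrow> 's \<Rightarrow> nat) \<Rightarrow> nat set \<Rightarrow> (nat \<Rightarrow> real) \<Rightarrow> bool" where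
  "stationary p F X Q \<longleftrightarrow>
     (\<forall>x\<in>X. 0 \<le> Q x) \<and> (\<Sum>x\<in>X. Q x) = 1 \<and>
     (\<forall>y\<in>X. Q y = (\<Sum>x\<in>X. \<Sum>s\<in>{s. F x s = y}. Q x * p s))"

text \<open>Irreducibility of the state chain (all p s > 0, so the transition graph has
  an edge x -> F x s for every s).\<close>
definition irreducible_chain :: "(nat \<Rightarrow> 's \<Rightarrow> nat) \<Rightarrow> nat set \<Rightarrow> bool" where
  "irreducible_chain F X \<longleftrightarrow>
     (\<forall>x\<in>X. \<forall>y\<in>X. (x, y) \<in> {(a, F a s) | a s. a \<in> X}\<^sup>*)"

definition avg_len :: "('s::finite \<Rightarrow> real) \<Rightarrow> (nat \<Rightarrow> real) \<Rightarrow> (nat \<Rightarrow> 's \<Rightarrow> bool list) \<Rightarrow> nat set \<Rightarrow> real" where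
  "avg_len p Q E X = (\<Sum>x\<in>X. \<Sum>s\<in>UNIV. p s * Q x * real (length (E x s)))"

text \<open>Yokoo-Dube-type sAEDS for the integers Ns, with states 1..N enumerated so that
  the stationary distribution Q is nonincreasing; Xs s enumerates X_s as
  Xs s 1, ..., Xs s (Ns s); A, B, C, D are the integer parameters.\<close>
definition YD_sAEDS ::
  "('s::finite \<Rightarrow> nat) \<Rightarrow> (nat \<Rightarrow> 's \<Rightarrow> bool list) \<Rightarrow> (nat \<Rightarrow> 's \<Rightarrow> nat) \<Rightarrow> (nat \<Rightarrow> real)
   \<Rightarrow> ('s \<Rightarrow> nat \<Rightarrow> nat) \<Rightarrow> ('s \<Rightarrow> nat) \<Rightarrow> ('s \<Rightarrow> nat) \<Rightarrow> ('s \<Rightarrow> nat) \<Rightarrow> ('s \<Rightarrow> nat) \<Rightarrow> bool" where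
  "YD_sAEDS Ns E F Q Xs A B C D \<longleftrightarrow>
    (let N = N_of Ns; X = {1..N} in
     is_sAEDS X E F \<and>
     stationary (prob Ns) F X Q \<and>
     (\<forall>i j. 1 \<le> i \<longrightarrow> i \<le> j \<longrightarrow> j \<le> N \<longrightarrow> Q j \<le> Q i) \<and>
     (\<forall>s. let k = kappa Ns s; m = mval Ns s; Fp = (\<lambda>x. {i\<in>X. F i s = x}) in
        card (Xset X F s) = Ns s \<and>
        bij_betw (Xs s) {1..Ns s} (Xset X F s) \<and>
        2 ^ (k - 1) * int (A s) + int (B s) = m \<and>
        2 ^ k * int (C s) + int (D s) = 2 * int N - 2 ^ k * int (Ns s) \<and>
        A s + C s + 1 = Ns s \<and>
        B s + D s \<ge> 1 \<and>
        (\<forall>j. 1 \<le> j \<and> j \<le> A s \<longrightarrow>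
           Fp (Xs s j) = {i. B s + (j - 1) * 2 ^ (k - 1) < i \<and> i \<le> B s + j * 2 ^ (k - 1)}) \<and>
        (\<forall>j. 1 \<le> j \<and> j \<le> C s \<longrightarrow>
           Fp (Xs s (A s + j)) = {i. m + int (j - 1) * 2 ^ k < int i \<and> int i \<le> m + int j * 2 ^ k}) \<and>
        Fp (Xs s (Ns s)) = {1..B s} \<union> {N - D s + 1..N} \<and>
        (\<forall>i\<in>X. length (E i s) = (if int i \<le> m then k - 1 else k))))"

end

theory Submission
  imports Defs
begin

lemma rearr:
  fixes Q a c :: "nat \<Rightarrow> real"
  assumes "\<forall>i j. 1 \<le> i \<longrightarrow> i \<le> j \<longrightarrow> j \<le> n \<longrightarrow> Q j \<le> Q i"
    and "\<forall>i\<in>{1..n}. 0 \<le> Q i"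
    and "\<forall>i j. 1 \<le> i \<longrightarrow> i \<le> j \<longrightarrow> j \<le> n \<longrightarrow> a i \<le> a j"
    and "\<forall>j\<in>{1..n}. card {y\<in>{1..n}. c y < a j} < j"
  shows "(\<Sum>i=1..n. Q i * a i) \<le> (\<Sum>i=1..n. Q i * c i)"
  using assms
proof (induction n arbitrary: c)
  case 0
  then show ?case by simp
next
  case (Suc m)
  define n where "n = Suc m"
  have fin: "finite (c ` {1..n})" and ne: "c ` {1..n} \<noteq> {}" by (auto simp: n_def)
  obtain ys where ys: "ys \<in> {1..n}" "c ys = Max (c ` {1..n})"
    using Max_in[OF fin ne] by auto
  have ysmax: "\<And>y. y \<in> {1..n} \<Longrightarrow> c y \<le> c ys" using ys fin by simp
  define c' where "c' y = (if y = ys then c n else if y = n then c ys else c y)" for y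
  have an: "a n \<le> c ys"
  proof (rule ccontr)
    assume "\<not> a n \<le> c ys"
    then have e: "{y\<in>{1..n}. c y < a n} = {1..n}" using ysmax by force
    have "card {y\<in>{1..n}. c y < a n} < n" using bspec[OF Suc.prems(4), of n] by (simp add: n_def)
    then show False unfolding e by simp
  qed
  have sw: "(\<Sum>i=1..n. Q i * c' i) \<le> (\<Sum>i=1..n. Q i * c i)"
  proof (cases "ys = n")
    case True
    then have "c' i = c i" for i by (simp add: c'_def)
    then show ?thesis by simp
  next
    case False
    have ysn: "ys < n" using ys False by auto
    have "(\<Sum>i=1..n. Q i * c i) - (\<Sum>i=1..n. Q i * c' i) = (\<Sum>i=1..n. Q i * (c i - c' i))"
      by (simp add: sum_subtractf algebra_simps)
    also have "\<dots> = (\<Sum>i\<in>{ys, n}. Q i * (c i - c' i))"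
      by (rule sum.mono_neutral_right) (use ys ysn in \<open>auto simp: c'_def n_def\<close>)
    also have "\<dots> = (Q ys - Q n) * (c ys - c n)" using False by (simp add: c'_def algebra_simps)
    also have "\<dots> \<ge> 0"
    proof -
      have "Q n \<le> Q ys" using Suc.prems(1) ys ysn by (auto simp: n_def)
      moreover have "c n \<le> c ys" using ysmax by (auto simp: n_def)
      ultimately show ?thesis by simp
    qed
    finally show ?thesis by simp
  qed
  have IH: "(\<Sum>i=1..m. Q i * a i) \<le> (\<Sum>i=1..m. Q i * c' i)"
  proof (rule Suc.IH)
    show "\<forall>i j. 1 \<le> i \<longrightarrow> i \<le> j \<longrightarrow> j \<le> m \<longrightarrow> Q j \<le> Q i" using Suc.prems(1) by auto
    show "\<forall>i\<in>{1..m}. 0 \<le> Q i" using Suc.prems(2) by auto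
    show "\<forall>i j. 1 \<le> i \<longrightarrow> i \<le> j \<longrightarrow> j \<le> m \<longrightarrow> a i \<le> a j" using Suc.prems(3) by auto
    show "\<forall>j\<in>{1..m}. card {y \<in> {1..m}. c' y < a j} < j"
    proof
      fix j assume j: "j \<in> {1..m}"
      define t where "t y = (if y = ys then n else y)" for y
      have "card {y \<in> {1..m}. c' y < a j} \<le> card {y\<in>{1..n}. c y < a j}"
      proof (rule card_inj_on_le[where f = t])
        show "inj_on t {y \<in> {1..m}. c' y < a j}" by (auto simp: inj_on_def t_def n_def)
        show "t ` {y \<in> {1..m}. c' y < a j} \<subseteq> {y \<in> {1..n}. c y < a j}"
          using ys by (auto simp: t_def c'_def n_def split: if_splits)
        show "finite {y \<in> {1..n}. c y < a j}" by simp
      qed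
      also have "\<dots> < j" using Suc.prems(4) j by (auto simp: n_def)
      finally show "card {y \<in> {1..m}. c' y < a j} < j" .
    qed
  qed
  have "(\<Sum>i=1..n. Q i * a i) = (\<Sum>i=1..m. Q i * a i) + Q n * a n" by (simp add: n_def)
  also have "\<dots> \<le> (\<Sum>i=1..m. Q i * c' i) + Q n * c' n"
    using IH an Suc.prems(2) by (auto simp: c'_def n_def intro!: add_mono mult_left_mono)
  also have "\<dots> = (\<Sum>i=1..n. Q i * c' i)" by (simp add: n_def)
  finally show ?case using sw by (simp add: n_def)
qed


definition vf :: "nat \<Rightarrow> nat \<Rightarrow> nat \<Rightarrow> nat" where
  "vf n a J = (if J \<le> a then 2*n - a + J - 1 else if J < n then n + J - a - 1 else 2*n - a - 1)"

lemma vf_inj: "a < n \<Longrightarrow> inj_on (vf n a) {1..n}"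
  unfolding inj_on_def vf_def by (auto split: if_splits)

lemma vf_ge: "a < n \<Longrightarrow> J \<in> {1..n} \<Longrightarrow> n \<le> vf n a J"
  unfolding vf_def by auto

lemma block_arith:
  fixes N n a b c d K i j :: nat and m :: int
  assumes e1: "int K * int a + int b = m" and e0: "m = 2 * int K * int n - int N"
    and e2: "2 * int K * int c + int d = 2 * int N - 2 * int K * int n" and e3: "a + c + 1 = n"
  shows "int b \<le> int K" and "int N - int d - m = 2 * int K * int c"
    and "1 \<le> j \<Longrightarrow> j \<le> a \<Longrightarrow> b + (j - 1) * K < i \<Longrightarrow> i \<le> b + j * K \<Longrightarrow>
         int i \<le> m \<and> K * vf n a j \<le> N + i - 1"
    and "1 \<le> j \<Longrightarrow> j \<le> c \<Longrightarrow> m + int (j - 1) * (2 * int K) < int i \<Longrightarrow> int i \<le> m + int j * (2 * int K) \<Longrightarrow>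
         \<not> int i \<le> m \<and> 2 * K * vf n a (a + j) \<le> N + i - 1"
    and "1 \<le> i \<Longrightarrow> i \<le> b \<Longrightarrow> int i \<le> m \<and> K * vf n a n \<le> N + i - 1"
    and "N - d + 1 \<le> i \<Longrightarrow> i \<le> N \<Longrightarrow> \<not> int i \<le> m \<and> 2 * K * vf n a n \<le> N + i - 1"
proof -
  have bd: "2 * int b + int d = 2 * int K"
  proof -
    have "2 * int K * (int a + int c) = 2 * int K * (int n - 1)" using e3 by simp
    then show ?thesis using e1 e0 e2 by (simp add: algebra_simps)
  qed
  then show b: "int b \<le> int K" by simp
  show nd: "int N - int d - m = 2 * int K * int c" using e2 e0 by (simp add: algebra_simps)
  {
    assume j: "1 \<le> j" "j \<le> a" "b + (j - 1) * K < i" "i \<le> b + j * K"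
    have "j * K \<le> a * K" using j(2) by (simp add: mult_right_mono)
    then have "int (j * K) \<le> int (a * K)" by (simp only: of_nat_le_iff)
    moreover have "int i \<le> int b + int K * int j" using j(4)
      by (metis mult.commute of_nat_add of_nat_le_iff of_nat_mult)
    ultimately have "int i \<le> m" using e1 by (simp add: algebra_simps)
    moreover have "int (K * vf n a j) = int K * (2 * int n - int a + int j - 1)"
      using j e3 by (simp add: vf_def of_nat_diff)
    moreover have "int K * (2 * int n - int a + int j - 1) = int N + int b + int K * (int j - 1)"
      using e1 e0 by (simp add: algebra_simps)
    moreover have "int b + int K * (int j - 1) < int i" using j(1,3)
      by (metis (no_types, lifting) int_ops(7) mult.commute of_nat_1 of_nat_add of_nat_diff of_nat_less_iff)
    ultimately show "int i \<le> m \<and> K * vf n a j \<le> N + i - 1" by linarith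
  }
  {
    assume j: "1 \<le> j" "j \<le> c" "m + int (j - 1) * (2 * int K) < int i" "int i \<le> m + int j * (2 * int K)"
    have "int (j - 1) * (2 * int K) \<ge> 0" by simp
    then have "\<not> int i \<le> m" using j(3) by linarith
    moreover have "int (2 * K * vf n a (a + j)) = 2 * int K * (int n + int j - 1)"
      using j e3 by (simp add: vf_def of_nat_diff)
    moreover have "2 * int K * (int n + int j - 1) = int N + m + int (j - 1) * (2 * int K)"
      using e0 j(1) by (simp add: algebra_simps of_nat_diff)
    ultimately show "\<not> int i \<le> m \<and> 2 * K * vf n a (a + j) \<le> N + i - 1" using j(3) by linarith
  }
  {
    assume i: "1 \<le> i" "i \<le> b"
    have "int i \<le> m" using i e1 by (smt (verit) of_nat_0_le_iff of_nat_le_iff zero_le_mult_iff)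
    moreover have "int (K * vf n a n) = int K * (2 * int n - int a - 1)"
      using e3 by (simp add: vf_def of_nat_diff)
    moreover have "int K * (2 * int n - int a - 1) = int N + int b - int K"
      using e1 e0 by (simp add: algebra_simps)
    ultimately show "int i \<le> m \<and> K * vf n a n \<le> N + i - 1" using i b by linarith
  }
  {
    assume i: "N - d + 1 \<le> i" "i \<le> N"
    have dN: "int d \<le> int N" using nd e1 by (smt (verit) of_nat_0_le_iff zero_le_mult_iff)
    have "int N - int d + 1 \<le> int i" using i dN by linarith
    then have "\<not> int i \<le> m" using nd by (smt (verit) of_nat_0_le_iff zero_le_mult_iff)
    moreover have "int (2 * K * vf n a n) = 2 * int K * (2 * int n - int a - 1)"
      using e3 by (simp add: vf_def of_nat_diff)
    moreover have "2 * int K * (2 * int n - int a - 1) = 2 * int N - int d"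
    proof -
      have "int c = int n - int a - 1" using e3 by simp
      then have "int K * int c = int K * (int n - int a - 1)" by simp
      then have "int K * int c = int K * int n - int K * int a - int K" by (simp add: right_diff_distrib)
      then show ?thesis using e2 by (simp add: algebra_simps)
    qed
    ultimately show "\<not> int i \<le> m \<and> 2 * K * vf n a n \<le> N + i - 1" using \<open>int N - int d + 1 \<le> int i\<close> by linarith
  }
qed


context
  fixes Ns :: "'s::finite \<Rightarrow> nat" and E F Q Xs A B C D
  assumes card2: "card (UNIV :: 's set) \<ge> 2" and pos: "\<forall>s. 0 < Ns s"
    and YD: "YD_sAEDS Ns E F Q Xs A B C D"
begin

abbreviation "NN \<equiv> N_of Ns"
abbreviation "XX \<equiv> {1..NN}"
abbreviation "pp \<equiv> prob Ns"
abbreviation "XS s \<equiv> Xset XX F s"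

lemma yd_sA: "is_sAEDS XX E F"
  using YD unfolding YD_sAEDS_def Let_def by blast

lemma yd_st: "stationary pp F XX Q"
  using YD unfolding YD_sAEDS_def Let_def by blast

lemma yd_mono: "\<forall>i j. 1 \<le> i \<longrightarrow> i \<le> j \<longrightarrow> j \<le> NN \<longrightarrow> Q j \<le> Q i"
  using YD unfolding YD_sAEDS_def Let_def by blast

lemma yd_s:
  "bij_betw (Xs s) {1..Ns s} (XS s) \<and>
   2 ^ (kappa Ns s - 1) * int (A s) + int (B s) = mval Ns s \<and>
   2 ^ kappa Ns s * int (C s) + int (D s) = 2 * int NN - 2 ^ kappa Ns s * int (Ns s) \<and>
   A s + C s + 1 = Ns s \<and>
   (\<forall>j. 1 \<le> j \<and> j \<le> A s \<longrightarrow> {i\<in>XX. F i s = Xs s j} =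
      {i. B s + (j - 1) * 2 ^ (kappa Ns s - 1) < i \<and> i \<le> B s + j * 2 ^ (kappa Ns s - 1)}) \<and>
   (\<forall>j. 1 \<le> j \<and> j \<le> C s \<longrightarrow> {i\<in>XX. F i s = Xs s (A s + j)} =
      {i. mval Ns s + int (j - 1) * 2 ^ kappa Ns s < int i \<and> int i \<le> mval Ns s + int j * 2 ^ kappa Ns s}) \<and>
   {i\<in>XX. F i s = Xs s (Ns s)} = {1..B s} \<union> {NN - D s + 1..NN} \<and>
   (\<forall>i\<in>XX. length (E i s) = (if int i \<le> mval Ns s then kappa Ns s - 1 else kappa Ns s))"
proof -
  have "\<forall>s. let k = kappa Ns s; m = mval Ns s; Fp = (\<lambda>x. {i\<in>XX. F i s = x}) in
        card (XS s) = Ns s \<and>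
        bij_betw (Xs s) {1..Ns s} (XS s) \<and>
        2 ^ (k - 1) * int (A s) + int (B s) = m \<and>
        2 ^ k * int (C s) + int (D s) = 2 * int NN - 2 ^ k * int (Ns s) \<and>
        A s + C s + 1 = Ns s \<and>
        B s + D s \<ge> 1 \<and>
        (\<forall>j. 1 \<le> j \<and> j \<le> A s \<longrightarrow>
           Fp (Xs s j) = {i. B s + (j - 1) * 2 ^ (k - 1) < i \<and> i \<le> B s + j * 2 ^ (k - 1)}) \<and>
        (\<forall>j. 1 \<le> j \<and> j \<le> C s \<longrightarrow>
           Fp (Xs s (A s + j)) = {i. m + int (j - 1) * 2 ^ k < int i \<and> int i \<le> m + int j * 2 ^ k}) \<and>
        Fp (Xs s (Ns s)) = {1..B s} \<union> {NN - D s + 1..NN} \<and>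
        (\<forall>i\<in>XX. length (E i s) = (if int i \<le> m then k - 1 else k))"
    using YD unfolding YD_sAEDS_def Let_def by blast
  then show ?thesis unfolding Let_def by blast
qed

lemma Npos: "Ns s < NN"
proof -
  have "\<exists>t. t \<noteq> s"
  proof (rule ccontr)
    assume "\<not> (\<exists>t. t \<noteq> s)"
    then have u: "(UNIV::'s set) = {s}" by auto
    have "card (UNIV::'s set) = card {s}" using u by (rule arg_cong)
    then have "card (UNIV::'s set) = 1" by simp
    with card2 show False by simp
  qed
  then obtain t where t: "t \<noteq> s" by blast
  have "NN = Ns s + (\<Sum>u\<in>UNIV - {s}. Ns u)"
    unfolding N_of_def by (rule sum.remove) auto
  moreover have "Ns t \<le> (\<Sum>u\<in>UNIV - {s}. Ns u)"
    by (rule member_le_sum) (use t in auto)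
  moreover have "0 < Ns t" using pos by blast
  ultimately show ?thesis by linarith
qed

lemmas yd1 = yd_s[THEN conjunct1]
lemmas yd2 = yd_s[THEN conjunct2, THEN conjunct1]
lemmas yd3 = yd_s[THEN conjunct2, THEN conjunct2, THEN conjunct1]
lemmas yd4 = yd_s[THEN conjunct2, THEN conjunct2, THEN conjunct2, THEN conjunct1]
lemmas yd5 = yd_s[THEN conjunct2, THEN conjunct2, THEN conjunct2, THEN conjunct2, THEN conjunct1]
lemmas yd6 = yd_s[THEN conjunct2, THEN conjunct2, THEN conjunct2, THEN conjunct2, THEN conjunct2, THEN conjunct1]
lemmas yd7 = yd_s[THEN conjunct2, THEN conjunct2, THEN conjunct2, THEN conjunct2, THEN conjunct2, THEN conjunct2, THEN conjunct1]
lemmas yd8 = yd_s[THEN conjunct2, THEN conjunct2, THEN conjunct2, THEN conjunct2, THEN conjunct2, THEN conjunct2, THEN conjunct2]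

lemma kappa_ge1: "1 \<le> kappa Ns s"
proof (rule ccontr)
  assume "\<not> 1 \<le> kappa Ns s"
  then have k0: "kappa Ns s = 0" by simp
  have h: "0 \<le> 2 ^ (kappa Ns s - 1) * int (A s) + int (B s)" by simp
  have "0 \<le> mval Ns s" using yd2[of s] h by linarith
  then show False using k0 Npos[of s] unfolding mval_def by simp
qed

definition vv :: "'s \<Rightarrow> nat \<Rightarrow> nat" where
  "vv s y = vf (Ns s) (A s) (inv_into {1..Ns s} (Xs s) y)"

lemma yd_bij: "bij_betw (Xs s) {1..Ns s} (XS s)" by (rule yd1)

lemma A_lt: "A s < Ns s" using yd4[of s] by linarith

lemma F_in: "i \<in> XX \<Longrightarrow> F i s \<in> XS s"
  unfolding Xset_def by blast

lemma F_X: "i \<in> XX \<Longrightarrow> F i s \<in> XX"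
  using yd_sA unfolding is_sAEDS_def is_AEDS_def by blast

lemma vv_ge: "y \<in> XS s \<Longrightarrow> Ns s \<le> vv s y"
  unfolding vv_def
  by (rule vf_ge[OF A_lt]) (rule bij_betwE[OF bij_betw_inv_into[OF yd1[of s]], rule_format])

lemma vv_inj: "inj_on (vv s) (XS s)"
proof -
  have b: "bij_betw (inv_into {1..Ns s} (Xs s)) (XS s) {1..Ns s}"
    by (rule bij_betw_inv_into[OF yd1[of s]])
  show ?thesis unfolding inj_on_def
  proof (intro ballI impI)
    fix y1 y2 assume y: "y1 \<in> XS s" "y2 \<in> XS s" "vv s y1 = vv s y2"
    have i1: "inv_into {1..Ns s} (Xs s) y1 \<in> {1..Ns s}" "inv_into {1..Ns s} (Xs s) y2 \<in> {1..Ns s}"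
      using b y(1,2) bij_betwE by blast+
    then have eqinv: "inv_into {1..Ns s} (Xs s) y1 = inv_into {1..Ns s} (Xs s) y2"
      using vf_inj[OF A_lt, of s] y(3) unfolding vv_def inj_on_def by blast
    have im: "Xs s ` {1..Ns s} = XS s" using yd_bij[of s] by (simp add: bij_betw_def)
    have y1e: "Xs s (inv_into {1..Ns s} (Xs s) y1) = y1" by (rule f_inv_into_f) (use y(1) im in simp)
    have y2e: "Xs s (inv_into {1..Ns s} (Xs s) y2) = y2" by (rule f_inv_into_f) (use y(2) im in simp)
    have "y1 = Xs s (inv_into {1..Ns s} (Xs s) y1)" using y1e by (rule sym)
    also have "\<dots> = Xs s (inv_into {1..Ns s} (Xs s) y2)" using eqinv by (rule arg_cong)
    also have "\<dots> = y2" by (rule y2e)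
    finally show "y1 = y2" .
  qed
qed



lemma key_len: assumes i: "i \<in> XX" shows "2 ^ length (E i s) * vv s (F i s) \<le> NN + i - 1"
proof -
  define k where "k = kappa Ns s"
  define K where "K = (2::nat) ^ (k - 1)"
  define m where "m = mval Ns s"
  define J where "J = inv_into {1..Ns s} (Xs s) (F i s)"
  have k1: "1 \<le> k" using kappa_ge1 k_def by simp
  have pk: "(2::nat) ^ k = 2 * K" unfolding K_def using k1 by (metis Suc_diff_le diff_Suc_1 power_Suc)
  have pki: "(2::int) ^ k = 2 * int K"
  proof -
    have "int ((2::nat)^k) = int (2*K)" using pk by (rule arg_cong)
    then show ?thesis by simp
  qed
  have pk1i: "(2::int) ^ (k - 1) = int K" unfolding K_def by simp
  note ysA = yd5[of s, folded k_def m_def]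
  note ysC = yd6[of s, folded k_def m_def]
  note ysW = yd7[of s]
  note ysB = yd1[of s]
  note e1' = yd2[of s, folded k_def m_def]
  have e1: "int K * int (A s) + int (B s) = m" using e1' by (simp only: pk1i)
  have e0: "m = 2 * int K * int (Ns s) - int NN" using pki unfolding m_def mval_def k_def by simp
  note e2' = yd3[of s, folded k_def m_def]
  have e2: "2 * int K * int (C s) + int (D s) = 2 * int NN - 2 * int K * int (Ns s)" using e2' by (simp only: pki)
  note e3 = yd4[of s]
  note BA = block_arith[OF e1 e0 e2 e3]
  have Fin: "F i s \<in> Xs s ` {1..Ns s}" using F_in[OF i] ysB by (simp add: bij_betw_def)
  have J: "J \<in> {1..Ns s}" unfolding J_def by (rule inv_into_into[OF Fin])
  have XJ: "Xs s J = F i s" unfolding J_def by (rule f_inv_into_f[OF Fin])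
  have iJ: "i \<in> {i\<in>XX. F i s = Xs s J}" using i XJ by simp
  have len: "length (E i s) = (if int i \<le> m then k - 1 else k)"
  proof -
    show ?thesis using yd8[of s, folded k_def m_def] i by blast
  qed
  have vvJ: "vv s (F i s) = vf (Ns s) (A s) J" unfolding vv_def J_def by simp
  consider (a) "J \<le> A s" | (c) "A s < J" "J < Ns s" | (w) "J = Ns s" using J by force
  then show ?thesis
  proof cases
    case a
    have eqA: "{i\<in>XX. F i s = Xs s J} = {i. B s + (J - 1) * K < i \<and> i \<le> B s + J * K}"
      using ysA a J unfolding K_def by simp
    have "i \<in> {i. B s + (J - 1) * K < i \<and> i \<le> B s + J * K}"
      using iJ unfolding eqA .
    then have "int i \<le> m \<and> K * vf (Ns s) (A s) J \<le> NN + i - 1" using BA(3)[of J i] a J by auto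
    then show ?thesis using len vvJ K_def by simp
  next
    case c
    define j where "j = J - A s"
    have j: "1 \<le> j" "j \<le> C s" "J = A s + j" using c e3 unfolding j_def by auto
    have eqC: "{i\<in>XX. F i s = Xs s J} = {i. m + int (j - 1) * 2 ^ k < int i \<and> int i \<le> m + int j * 2 ^ k}"
      using ysC j by simp
    have "i \<in> {i. m + int (j - 1) * 2 ^ k < int i \<and> int i \<le> m + int j * 2 ^ k}"
      using iJ unfolding eqC .
    then have "\<not> int i \<le> m \<and> 2 * K * vf (Ns s) (A s) (A s + j) \<le> NN + i - 1"
      using BA(4)[of j i] j pki by auto
    then show ?thesis using len vvJ pk j by simp
  next
    case w
    have "i \<in> {1..B s} \<union> {NN - D s + 1..NN}" using iJ unfolding w ysW .
    then show ?thesis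
    proof
      assume "i \<in> {1..B s}"
      then have "int i \<le> m \<and> K * vf (Ns s) (A s) (Ns s) \<le> NN + i - 1" using BA(5)[of i] by auto
      then show ?thesis using len vvJ w K_def by simp
    next
      assume "i \<in> {NN - D s + 1..NN}"
      then have "\<not> int i \<le> m \<and> 2 * K * vf (Ns s) (A s) (Ns s) \<le> NN + i - 1" using BA(6)[of i] by auto
      then show ?thesis using len vvJ w pk by simp
    qed
  qed
qed



lemma NNpos: "0 < NN" using Npos[of undefined] by linarith

lemma pp_pos: "0 < pp s" unfolding prob_def using pos NNpos by simp

lemma sum_pp: "(\<Sum>s\<in>UNIV. pp s) = 1"
proof -
  have "(\<Sum>s\<in>UNIV. pp s) = (\<Sum>s\<in>UNIV. real (Ns s)) / real NN"
    unfolding prob_def by (simp add: sum_divide_distrib)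
  also have "(\<Sum>s\<in>UNIV. real (Ns s)) = real NN" unfolding N_of_def by simp
  then have "(\<Sum>s\<in>UNIV. real (Ns s)) / real NN = 1" using NNpos by simp
  finally show ?thesis .
qed

lemma XS_disj: "s \<noteq> t \<Longrightarrow> XS s \<inter> XS t = {}"
  using yd_sA unfolding is_sAEDS_def by blast

lemma XS_sub: "XS s \<subseteq> XX" using F_X unfolding Xset_def by blast

lemma XS_fin: "finite (XS s)" by (rule finite_subset[OF XS_sub]) simp

lemma XS_union: "(\<Union>s. XS s) = XX"
  using yd_sA unfolding is_sAEDS_def by blast

lemma Qnn: "i \<in> XX \<Longrightarrow> 0 \<le> Q i"
  using yd_st unfolding stationary_def by blast

lemma Qsum: "(\<Sum>i\<in>XX. Q i) = 1"
  using yd_st unfolding stationary_def by blast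

lemma transfer: "(\<Sum>y\<in>XS s. Q y * g y) = (\<Sum>i\<in>XX. pp s * Q i * g (F i s))"
proof -
  have st: "\<forall>y\<in>XX. Q y = (\<Sum>x\<in>XX. \<Sum>s'\<in>{s'. F x s' = y}. Q x * pp s')"
    by (rule yd_st[unfolded stationary_def, THEN conjunct2, THEN conjunct2])
  have Qy: "Q y = (\<Sum>x\<in>XX. if F x s = y then Q x * pp s else 0)" if y: "y \<in> XS s" for y
  proof -
    have "{s'. F x s' = y} = (if F x s = y then {s} else {})" if x: "x \<in> XX" for x
    proof -
      have H: "s' = s" if "F x s' = y" for s'
      proof (rule ccontr)
        assume "s' \<noteq> s"
        moreover have "y \<in> XS s'" using F_in[OF x, of s'] that by simp
        ultimately have "y \<in> XS s' \<inter> XS s" using y by blast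
        then show False using equals0D[OF XS_disj[OF \<open>s' \<noteq> s\<close>], of y] by contradiction
      qed
      show ?thesis
      proof (cases "F x s = y")
        case True
        have "{s'. F x s' = y} = {s}"
        proof (intro equalityI subsetI)
          fix s' assume "s' \<in> {s'. F x s' = y}"
          then have "F x s' = y" by simp
          then have "s' = s" by (rule H)
          then show "s' \<in> {s}" by simp
        next
          fix s' assume "s' \<in> {s}"
          then show "s' \<in> {s'. F x s' = y}" using True by simp
        qed
        then show ?thesis using True by simp
      next
        case False
        have "{s'. F x s' = y} = {}"
        proof (intro equalityI subsetI)
          fix s' assume "s' \<in> {s'. F x s' = y}"
          then have "F x s' = y" by simp
          moreover from this have "s' = s" by (rule H)
          ultimately show "s' \<in> {}" using False by simp
        qed simp
        then show ?thesis using False by simp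
      qed
    qed
    then have se: "(\<Sum>x\<in>XX. \<Sum>s'\<in>{s'. F x s' = y}. Q x * pp s') = (\<Sum>x\<in>XX. if F x s = y then Q x * pp s else 0)"
      by (intro sum.cong refl) simp
    have "y \<in> XX" using y XS_sub by blast
    then have "Q y = (\<Sum>x\<in>XX. \<Sum>s'\<in>{s'. F x s' = y}. Q x * pp s')" by (rule st[rule_format])
    also note se
    finally show ?thesis .
  qed
  have "(\<Sum>y\<in>XS s. Q y * g y) = (\<Sum>y\<in>XS s. \<Sum>x\<in>XX. if F x s = y then Q x * pp s * g y else 0)"
  proof (intro sum.cong refl)
    fix y assume y: "y \<in> XS s"
    have "Q y * g y = (\<Sum>x\<in>XX. if F x s = y then Q x * pp s else 0) * g y" by (subst Qy[OF y]) (rule refl)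
    also have "\<dots> = (\<Sum>x\<in>XX. if F x s = y then Q x * pp s * g y else 0)"
      unfolding sum_distrib_right by (intro sum.cong refl) simp
    finally show "Q y * g y = (\<Sum>x\<in>XX. if F x s = y then Q x * pp s * g y else 0)" .
  qed
  also have "\<dots> = (\<Sum>x\<in>XX. \<Sum>y\<in>XS s. if F x s = y then Q x * pp s * g y else 0)"
    by (rule sum.swap)
  also have "\<dots> = (\<Sum>x\<in>XX. pp s * Q x * g (F x s))"
  proof (intro sum.cong refl)
    fix x assume x: "x \<in> XX"
    from XS_fin[of s] show "(\<Sum>y\<in>XS s. if F x s = y then Q x * pp s * g y else 0) = pp s * Q x * g (F x s)"
      using F_in[OF x, of s] by (simp add: sum.delta)
  qed
  finally show ?thesis .
qed



lemma sumQ_XS: "(\<Sum>y\<in>XS s. Q y) = pp s"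
  using transfer[where s=s and g="\<lambda>_. 1"] Qsum by (simp add: sum_distrib_left[symmetric])

lemma sum_XX: "(\<Sum>y\<in>XX. h y) = (\<Sum>s\<in>UNIV. \<Sum>y\<in>XS s. h y)"
proof -
  have "(\<Sum>y\<in>(\<Union>s\<in>UNIV. XS s). h y) = (\<Sum>s\<in>UNIV. \<Sum>y\<in>XS s. h y)"
  proof (rule sum.UNION_disjoint)
    show "finite (UNIV::'s set)" by simp
    show "\<forall>s\<in>UNIV. finite (XS s)" using XS_fin by blast
    show "\<forall>s\<in>UNIV. \<forall>t\<in>UNIV. s \<noteq> t \<longrightarrow> XS s \<inter> XS t = {}" using XS_disj by blast
  qed
  then show ?thesis using XS_union by simp
qed



lemma log_step: fixes v :: real assumes v: "1 \<le> v"
  shows "log 2 (v + 1) - log 2 v \<le> 1 / (v * ln 2)"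
proof -
  have "ln (v + 1) - ln v = ln ((v + 1) / v)" using v by (simp add: ln_div)
  also have "(v + 1) / v = 1 + 1 / v" using v by (simp add: field_simps)
  also have "ln (1 + 1 / v) \<le> 1 / v" by (rule ln_add_one_self_le_self) (use v in simp)
  finally have h: "ln (v + 1) - ln v \<le> 1 / v" .
  have "log 2 (v + 1) - log 2 v = (ln (v + 1) - ln v) / ln 2" unfolding log_def by (simp add: diff_divide_distrib)
  also have "\<dots> \<le> (1 / v) / ln 2" by (rule divide_right_mono[OF h]) simp
  also have "\<dots> = 1 / (v * ln 2)" by simp
  finally show ?thesis .
qed

definition sy :: "nat \<Rightarrow> 's" where "sy y = (SOME s. y \<in> XS s)"

lemma sy_eq: assumes y: "y \<in> XS s" shows "sy y = s"
proof -
  have "y \<in> XS (sy y)" unfolding sy_def using y by (rule someI)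
  show ?thesis
  proof (rule ccontr)
    assume ne: "sy y \<noteq> s"
    have "y \<in> XS (sy y) \<inter> XS s" using \<open>y \<in> XS (sy y)\<close> y by (rule IntI)
    then show False using equals0D[OF XS_disj[OF ne], of y] by contradiction
  qed
qed

lemma sy_in: assumes y: "y \<in> XX" shows "y \<in> XS (sy y)"
proof -
  have "y \<in> (\<Union>s. XS s)" using y XS_union by simp
  then obtain s where "y \<in> XS s" by (rule UN_E)
  then show ?thesis using sy_eq by simp
qed

definition aa :: "nat \<Rightarrow> real" where "aa i = log 2 (real (NN + i - 1))"
definition cc :: "nat \<Rightarrow> real" where
  "cc y = log 2 ((real (vv (sy y) y) + 1) / pp (sy y))"

lemma vv_pos: "y \<in> XS s \<Longrightarrow> 1 \<le> real (vv s y)"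
proof -
  assume y: "y \<in> XS s"
  have "Ns s \<le> vv s y" by (rule vv_ge[OF y])
  moreover have "0 < Ns s" using pos by (rule spec)
  ultimately have "1 \<le> vv s y" by linarith
  then show ?thesis by simp
qed

lemma len_bound: assumes x: "x \<in> XX"
  shows "real (length (E x s)) \<le> aa x - log 2 (real (vv s (F x s)))"
proof -
  define l where "l = length (E x s)"
  define v where "v = vv s (F x s)"
  have v1: "1 \<le> real v" unfolding v_def by (rule vv_pos[OF F_in[OF x]])
  have "real (2 ^ l * v) \<le> real (NN + x - 1)" using key_len[OF x, of s] unfolding l_def v_def
    by (simp only: of_nat_le_iff)
  then have h: "2 ^ l * real v \<le> real (NN + x - 1)" by simp
  have "log 2 (2 ^ l * real v) = real l + log 2 (real v)"
    using v1 by (simp add: log_mult log_nat_power)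
  moreover have "log 2 (2 ^ l * real v) \<le> log 2 (real (NN + x - 1))"
    using h v1 x NNpos by (subst log_le_cancel_iff) auto
  ultimately show ?thesis unfolding aa_def l_def v_def by linarith
qed

lemma card_cond: assumes j: "j \<in> {1..NN}" shows "card {y\<in>{1..NN}. cc y < aa j} < j"
proof -
  define T where "T = real (NN + j - 1)"
  have T: "T = real NN + real (j - 1)" using j unfolding T_def by auto
  have Tpos: "0 < T" using T NNpos by simp
  define S where "S s = {y\<in>XS s. (real (vv s y) + 1) / pp s < T}" for s
  have sub: "{y\<in>{1..NN}. cc y < aa j} \<subseteq> (\<Union>s\<in>UNIV. S s)"
  proof
    fix y assume "y \<in> {y\<in>{1..NN}. cc y < aa j}"
    then have y: "y \<in> XX" and lt: "cc y < aa j" by auto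
    define s where "s = sy y"
    have ys: "y \<in> XS s" unfolding s_def by (rule sy_in[OF y])
    have pos1: "0 < (real (vv s y) + 1) / pp s" using pp_pos[of s] by simp
    have "log 2 ((real (vv s y) + 1) / pp s) < log 2 T" using lt unfolding cc_def aa_def s_def T_def .
    then have "(real (vv s y) + 1) / pp s < T" using pos1 Tpos by simp
    then have "y \<in> S s" unfolding S_def using ys by simp
    then show "y \<in> (\<Union>s\<in>UNIV. S s)" by (rule UN_I[OF UNIV_I])
  qed
  have finS: "finite (S s)" for s unfolding S_def using XS_fin[of s] by simp
  have cardS: "real (card (S s)) \<le> real (j - 1) * real (Ns s) / real NN" for s
  proof -
    define \<delta> where "\<delta> = real (j - 1) * real (Ns s) / real NN"
    have d0: "0 \<le> \<delta>" unfolding \<delta>_def by simp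
    have img: "vv s ` S s \<subseteq> {Ns s..<Ns s + nat \<lfloor>\<delta>\<rfloor>}"
    proof
      fix w assume "w \<in> vv s ` S s"
      then obtain y where yS: "y \<in> S s" and w: "w = vv s y" by (rule imageE)
      from yS have y: "y \<in> XS s" "(real (vv s y) + 1) / pp s < T" unfolding S_def by simp_all
      have ge: "Ns s \<le> w" using vv_ge[OF y(1)] w by simp
      have "real (vv s y) + 1 < T * pp s" using y(2) pp_pos[of s] by (simp add: divide_less_eq)
      also have "T * pp s = real (Ns s) + \<delta>"
        unfolding T \<delta>_def prob_def using NNpos by (simp add: field_simps)
      finally have "real w + 1 - real (Ns s) < \<delta>" using w by simp
      then have "real (w + 1 - Ns s) \<le> \<delta>" using ge by (simp add: of_nat_diff)
      then have "int (w + 1 - Ns s) \<le> \<lfloor>\<delta>\<rfloor>" by (simp add: le_floor_iff)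
      then have "w + 1 - Ns s \<le> nat \<lfloor>\<delta>\<rfloor>" by linarith
      then show "w \<in> {Ns s..<Ns s + nat \<lfloor>\<delta>\<rfloor>}" using ge by simp
    qed
    have "card (S s) = card (vv s ` S s)"
      by (rule card_image[symmetric]) (rule inj_on_subset[OF vv_inj], auto simp: S_def)
    also have "\<dots> \<le> card {Ns s..<Ns s + nat \<lfloor>\<delta>\<rfloor>}" by (rule card_mono[OF _ img]) simp
    also have "\<dots> = nat \<lfloor>\<delta>\<rfloor>" by simp
    finally have "real (card (S s)) \<le> real (nat \<lfloor>\<delta>\<rfloor>)" by (simp only: of_nat_le_iff)
    also have "real (nat \<lfloor>\<delta>\<rfloor>) \<le> \<delta>" using d0 by simp
    finally show ?thesis unfolding \<delta>_def .
  qed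
  have "card {y\<in>{1..NN}. cc y < aa j} \<le> card (\<Union>s\<in>UNIV. S s)"
    by (rule card_mono[OF _ sub]) (simp add: finS)
  also have "\<dots> \<le> (\<Sum>s\<in>UNIV. card (S s))" by (rule card_UN_le) simp
  finally have "real (card {y\<in>{1..NN}. cc y < aa j}) \<le> real (\<Sum>s\<in>UNIV. card (S s))"
    by (simp only: of_nat_le_iff)
  also have "\<dots> = (\<Sum>s\<in>UNIV. real (card (S s)))" by simp
  also have "\<dots> \<le> (\<Sum>s\<in>UNIV. real (j - 1) * real (Ns s) / real NN)" by (rule sum_mono) (rule cardS)
  also have "\<dots> = real (j - 1) * (\<Sum>s\<in>UNIV. real (Ns s)) / real NN"
    by (simp add: sum_distrib_left sum_divide_distrib)
  also have "(\<Sum>s\<in>UNIV. real (Ns s)) = real NN" unfolding N_of_def by simp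
  also have "real (j - 1) * real NN / real NN = real (j - 1)" using NNpos by simp
  finally have "real (card {y\<in>{1..NN}. cc y < aa j}) \<le> real (j - 1)" .
  then have "card {y\<in>{1..NN}. cc y < aa j} \<le> j - 1" by (simp only: of_nat_le_iff)
  moreover have "j - 1 < j" using j by simp
  ultimately show ?thesis by (rule le_less_trans)
qed



lemma aa_mono: "\<forall>i j. 1 \<le> i \<longrightarrow> i \<le> j \<longrightarrow> j \<le> NN \<longrightarrow> aa i \<le> aa j"
proof (intro allI impI)
  fix i j :: nat assume "1 \<le> i" "i \<le> j" "j \<le> NN"
  moreover have "0 < NN" by (rule NNpos)
  ultimately show "aa i \<le> aa j" unfolding aa_def by (subst log_le_cancel_iff) auto
qed

lemma bracket: assumes y: "y \<in> XS s"
  shows "log 2 ((real (vv s y) + 1) / pp s) - log 2 (real (vv s y)) + log 2 (pp s) \<le> 1 / (real (Ns s) * ln 2)"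
proof -
  have v1: "1 \<le> real (vv s y)" by (rule vv_pos[OF y])
  have p: "0 < pp s" by (rule pp_pos)
  have "log 2 ((real (vv s y) + 1) / pp s) = log 2 (real (vv s y) + 1) - log 2 (pp s)"
    using v1 p by (simp add: log_divide)
  then have "log 2 ((real (vv s y) + 1) / pp s) - log 2 (real (vv s y)) + log 2 (pp s)
      = log 2 (real (vv s y) + 1) - log 2 (real (vv s y))" by simp
  also have "\<dots> \<le> 1 / (real (vv s y) * ln 2)" by (rule log_step[OF v1])
  also have "\<dots> \<le> 1 / (real (Ns s) * ln 2)"
  proof (rule divide_left_mono)
    show "real (Ns s) * ln 2 \<le> real (vv s y) * ln 2" using vv_ge[OF y] by simp
    have n0: "0 < real (Ns s)" using pos by simp
    have l0: "0 < ln (2::real)" by simp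
    have v0: "0 < real (vv s y)" using v1 by simp
    show "0 < real (vv s y) * ln 2 * (real (Ns s) * ln 2)"
      using n0 l0 v0 by (intro mult_pos_pos)
  qed simp
  finally show ?thesis .
qed

lemma main_bound: "avg_len pp Q E XX \<le> entropy pp + (real (card (UNIV::'s set)) / ln 2) / real NN"
proof -
  have A1: "avg_len pp Q E XX \<le> (\<Sum>x\<in>XX. \<Sum>s\<in>UNIV. pp s * Q x * (aa x - log 2 (real (vv s (F x s)))))"
    unfolding avg_len_def
  proof (rule sum_mono, rule sum_mono)
    fix x s assume x: "x \<in> XX"
    have "0 \<le> pp s * Q x" using Qnn[OF x] pp_pos[of s] by simp
    then show "pp s * Q x * real (length (E x s)) \<le> pp s * Q x * (aa x - log 2 (real (vv s (F x s))))"
      by (rule mult_left_mono[OF len_bound[OF x]])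
  qed
  have A1b: "(\<Sum>x\<in>XX. \<Sum>s\<in>UNIV. pp s * Q x * (aa x - log 2 (real (vv s (F x s)))))
      = (\<Sum>x\<in>XX. Q x * aa x) - (\<Sum>s\<in>UNIV. \<Sum>y\<in>XS s. Q y * log 2 (real (vv s y)))"
  proof -
    have "(\<Sum>x\<in>XX. \<Sum>s\<in>UNIV. pp s * Q x * (aa x - log 2 (real (vv s (F x s)))))
      = (\<Sum>x\<in>XX. \<Sum>s\<in>UNIV. pp s * (Q x * aa x)) - (\<Sum>x\<in>XX. \<Sum>s\<in>UNIV. pp s * Q x * log 2 (real (vv s (F x s))))"
      by (simp add: right_diff_distrib sum_subtractf mult.assoc)
    also have "(\<Sum>x\<in>XX. \<Sum>s\<in>UNIV. pp s * (Q x * aa x)) = (\<Sum>x\<in>XX. Q x * aa x)"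
      by (simp add: sum_distrib_right[symmetric] sum_pp)
    also have "(\<Sum>x\<in>XX. \<Sum>s\<in>UNIV. pp s * Q x * log 2 (real (vv s (F x s))))
        = (\<Sum>s\<in>UNIV. \<Sum>x\<in>XX. pp s * Q x * log 2 (real (vv s (F x s))))" by (rule sum.swap)
    also have "\<dots> = (\<Sum>s\<in>UNIV. \<Sum>y\<in>XS s. Q y * log 2 (real (vv s y)))"
      by (rule sum.cong[OF refl]) (rule transfer[symmetric])
    finally show ?thesis .
  qed
  have A2: "(\<Sum>x\<in>XX. Q x * aa x) \<le> (\<Sum>s\<in>UNIV. \<Sum>y\<in>XS s. Q y * log 2 ((real (vv s y) + 1) / pp s))"
  proof -
    have "(\<Sum>x=1..NN. Q x * aa x) \<le> (\<Sum>x=1..NN. Q x * cc x)"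
    proof (rule rearr)
      show "\<forall>i j. 1 \<le> i \<longrightarrow> i \<le> j \<longrightarrow> j \<le> NN \<longrightarrow> Q j \<le> Q i" by (rule yd_mono)
      show "\<forall>i\<in>{1..NN}. 0 \<le> Q i" using Qnn by blast
      show "\<forall>i j. 1 \<le> i \<longrightarrow> i \<le> j \<longrightarrow> j \<le> NN \<longrightarrow> aa i \<le> aa j" by (rule aa_mono)
      show "\<forall>j\<in>{1..NN}. card {y \<in> {1..NN}. cc y < aa j} < j" using card_cond by blast
    qed
    also have "(\<Sum>x=1..NN. Q x * cc x) = (\<Sum>s\<in>UNIV. \<Sum>y\<in>XS s. Q y * cc y)" by (rule sum_XX)
    also have "\<dots> = (\<Sum>s\<in>UNIV. \<Sum>y\<in>XS s. Q y * log 2 ((real (vv s y) + 1) / pp s))"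
    proof (rule sum.cong[OF refl], rule sum.cong[OF refl])
      fix s y assume "y \<in> XS s"
      then have "sy y = s" by (rule sy_eq)
      then show "Q y * cc y = Q y * log 2 ((real (vv s y) + 1) / pp s)" unfolding cc_def by simp
    qed
    finally show ?thesis .
  qed
  have A3: "entropy pp = - (\<Sum>s\<in>UNIV. \<Sum>y\<in>XS s. Q y * log 2 (pp s))"
  proof -
    have "(\<Sum>y\<in>XS s. Q y * log 2 (pp s)) = pp s * log 2 (pp s)" for s
    proof -
      have "(\<Sum>y\<in>XS s. Q y * log 2 (pp s)) = (\<Sum>y\<in>XS s. Q y) * log 2 (pp s)" by (rule sum_distrib_right[symmetric])
      also have "\<dots> = pp s * log 2 (pp s)" by (simp only: sumQ_XS)
      finally show ?thesis .
    qed
    then show ?thesis unfolding entropy_def by simp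
  qed
  have A4: "(\<Sum>s\<in>UNIV. \<Sum>y\<in>XS s. Q y * log 2 ((real (vv s y) + 1) / pp s))
      - (\<Sum>s\<in>UNIV. \<Sum>y\<in>XS s. Q y * log 2 (real (vv s y)))
      + (\<Sum>s\<in>UNIV. \<Sum>y\<in>XS s. Q y * log 2 (pp s)) \<le> (real (card (UNIV::'s set)) / ln 2) / real NN"
  proof -
    have pw: "pp s * (1 / (real (Ns s) * ln 2)) = 1 / (real NN * ln 2)" for s
    proof -
      have "0 < Ns s" using pos by (rule spec)
      then show "pp s * (1 / (real (Ns s) * ln 2)) = 1 / (real NN * ln 2)"
        unfolding prob_def by (simp add: field_simps)
    qed
    have "(\<Sum>s\<in>UNIV. \<Sum>y\<in>XS s. Q y * log 2 ((real (vv s y) + 1) / pp s))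
      - (\<Sum>s\<in>UNIV. \<Sum>y\<in>XS s. Q y * log 2 (real (vv s y)))
      + (\<Sum>s\<in>UNIV. \<Sum>y\<in>XS s. Q y * log 2 (pp s))
      = (\<Sum>s\<in>UNIV. \<Sum>y\<in>XS s. Q y * (log 2 ((real (vv s y) + 1) / pp s) - log 2 (real (vv s y)) + log 2 (pp s)))"
      by (simp add: sum_subtractf sum.distrib algebra_simps)
    also have "\<dots> \<le> (\<Sum>s\<in>UNIV. \<Sum>y\<in>XS s. Q y * (1 / (real (Ns s) * ln 2)))"
    proof (rule sum_mono, rule sum_mono)
      fix s y assume y: "y \<in> XS s"
      have "0 \<le> Q y" using Qnn XS_sub y by blast
      then show "Q y * (log 2 ((real (vv s y) + 1) / pp s) - log 2 (real (vv s y)) + log 2 (pp s))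
          \<le> Q y * (1 / (real (Ns s) * ln 2))" by (rule mult_left_mono[OF bracket[OF y]])
    qed
    also have "\<dots> = (\<Sum>s\<in>UNIV. pp s * (1 / (real (Ns s) * ln 2)))"
    proof (rule sum.cong[OF refl])
      fix s
      have "(\<Sum>y\<in>XS s. Q y * (1 / (real (Ns s) * ln 2))) = (\<Sum>y\<in>XS s. Q y) * (1 / (real (Ns s) * ln 2))"
        by (rule sum_distrib_right[symmetric])
      also have "\<dots> = pp s * (1 / (real (Ns s) * ln 2))" by (simp only: sumQ_XS)
      finally show "(\<Sum>y\<in>XS s. Q y * (1 / (real (Ns s) * ln 2))) = pp s * (1 / (real (Ns s) * ln 2))" .
    qed
    also have "\<dots> = (\<Sum>s\<in>(UNIV::'s set). 1 / (real NN * ln 2))" by (simp only: pw)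
    also have "\<dots> = (real (card (UNIV::'s set)) / ln 2) / real NN" by simp
    finally show ?thesis .
  qed
  show ?thesis using A1 A1b A2 A3 A4 by linarith
qed


end

theorem theorem7:
  fixes alphabet :: "'s::finite itself"
  assumes "card (UNIV :: 's set) \<ge> 2"
  shows "\<exists>Cst::real. \<forall>(Ns :: 's \<Rightarrow> nat) E F Q Xs A B C D.
           (\<forall>s. 0 < Ns s) \<and> YD_sAEDS Ns E F Q Xs A B C D \<and>
           irreducible_chain F {1..N_of Ns}
           \<longrightarrow> avg_len (prob Ns) Q E {1..N_of Ns} \<le> entropy (prob Ns) + Cst / real (N_of Ns)"
proof (intro exI[of _ "real (card (UNIV::'s set)) / ln 2"] allI impI)
  fix Ns :: "'s \<Rightarrow> nat" and E F Q Xs A B C D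
  assume h: "(\<forall>s. 0 < Ns s) \<and> YD_sAEDS Ns E F Q Xs A B C D \<and> irreducible_chain F {1..N_of Ns}"
  show "avg_len (prob Ns) Q E {1..N_of Ns} \<le> entropy (prob Ns) + real (card (UNIV::'s set)) / ln 2 / real (N_of Ns)"
    by (rule main_bound[OF assms conjunct1[OF h] conjunct1[OF conjunct2[OF h]]])
qed

end
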